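(* Under the standing assumptions, $G$ does not contain a vertex $v$ of degree $8$ together with pairwise distinct neighbours $x,t,w,y,z,u$ of $v$ and a vertex $p\notin\{v,x,t,w,y,z,u\}$ such that $xt,tw,wy,zu\in E(G)$, $p$ is adjacent to both $y$ and $z$, and $d(t)=d(y)=d(z)=3$.
   Context: Standing assumptions: A total $9$-coloring of a graph is an assignment of colors from $\{1,\dots,9\}$ to the vertices and edges such that adjacent vertices, edges sharing an endpoint, and a vertex and an incident edge receive different colors. A $4$-fan is the graph on six vertices $c,u_1,\dots,u_5$ with edges $cu_j$ ($1\le j\le5$) and $u_ju_{j+1}$ ($1\le j\le4$). $G$ is a minimal counterexample: $G$ is a simple planar graph with maximum degree $8$, containing no subgraph isomorphic to a $4$-fan, that has no total $9$-coloring, and such that every simple planar graph $H$ with maximum degree at most $8$, no subgraph isomorphic to a $4$-fan, and $|V(H)|+|E(H)|<|V(G)|+|E(G)|$ has a total $9$-coloring. $d(\cdot)$ denotes degree in $G$. *)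

theory Defs
  imports "HOL-Analysis.Analysis"
begin

definition simple_graph :: "'a set \<Rightarrow> 'a set set \<Rightarrow> bool" where
  "simple_graph V E \<longleftrightarrow> finite V \<and> (\<forall>e\<in>E. e \<subseteq> V \<and> card e = 2)"

definition degree :: "'a set \<Rightarrow> 'a set set \<Rightarrow> 'a \<Rightarrow> nat" where
  "degree V E v = card {u\<in>V. {u, v} \<in> E}"

definition max_degree_le :: "nat \<Rightarrow> 'a set \<Rightarrow> 'a set set \<Rightarrow> bool" where
  "max_degree_le k V E \<longleftrightarrow> (\<forall>v\<in>V. degree V E v \<le> k)"

definition max_degree_eq :: "nat \<Rightarrow> 'a set \<Rightarrow> 'a set set \<Rightarrow> bool" where
  "max_degree_eq k V E \<longleftrightarrow> max_degree_le k V E \<and> (\<exists>v\<in>V. degree V E v = k)"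

definition planar :: "'a set \<Rightarrow> 'a set set \<Rightarrow> bool" where
  "planar V E \<longleftrightarrow>
     (\<exists>(pos :: 'a \<Rightarrow> real^2) (g :: 'a set \<Rightarrow> real \<Rightarrow> real^2).
        inj_on pos V \<and>
        (\<forall>e\<in>E. arc (g e) \<and> {pathstart (g e), pathfinish (g e)} = pos ` e \<and>
                 path_image (g e) \<inter> pos ` V = pos ` e) \<and>
        (\<forall>e\<in>E. \<forall>e'\<in>E. e \<noteq> e' \<longrightarrow> path_image (g e) \<inter> path_image (g e') \<subseteq> pos ` (e \<inter> e')))"

text \<open>Contains a (not necessarily induced) subgraph isomorphic to the 4-fan.\<close>

definition has_4fan :: "'a set \<Rightarrow> 'a set set \<Rightarrow> bool" where
  "has_4fan V E \<longleftrightarrow>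
     (\<exists>c u1 u2 u3 u4 u5. distinct [c, u1, u2, u3, u4, u5] \<and>
        {c, u1, u2, u3, u4, u5} \<subseteq> V \<and>
        {c, u1} \<in> E \<and> {c, u2} \<in> E \<and> {c, u3} \<in> E \<and> {c, u4} \<in> E \<and> {c, u5} \<in> E \<and>
        {u1, u2} \<in> E \<and> {u2, u3} \<in> E \<and> {u3, u4} \<in> E \<and> {u4, u5} \<in> E)"

definition total_coloring :: "nat \<Rightarrow> 'a set \<Rightarrow> 'a set set \<Rightarrow> ('a \<Rightarrow> nat) \<Rightarrow> ('a set \<Rightarrow> nat) \<Rightarrow> bool" where
  "total_coloring k V E cv ce \<longleftrightarrow>
     (\<forall>v\<in>V. cv v \<in> {1..k}) \<and> (\<forall>e\<in>E. ce e \<in> {1..k}) \<and>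
     (\<forall>u v. {u, v} \<in> E \<longrightarrow> cv u \<noteq> cv v) \<and>
     (\<forall>e\<in>E. \<forall>e'\<in>E. e \<noteq> e' \<and> e \<inter> e' \<noteq> {} \<longrightarrow> ce e \<noteq> ce e') \<and>
     (\<forall>e\<in>E. \<forall>v\<in>e. cv v \<noteq> ce e)"

definition total_colorable :: "nat \<Rightarrow> 'a set \<Rightarrow> 'a set set \<Rightarrow> bool" where
  "total_colorable k V E \<longleftrightarrow> (\<exists>cv ce. total_coloring k V E cv ce)"

text \<open>Minimal counterexample. Competitor graphs H are taken on vertex type nat,
  which represents every finite graph up to isomorphism.\<close>

definition minimal_counterexample :: "'a set \<Rightarrow> 'a set set \<Rightarrow> bool" where
  "minimal_counterexample V E \<longleftrightarrow>
     simple_graph V E \<and> planar V E \<and> max_degree_eq 8 V E \<and> \<not> has_4fan V E \<and>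
     \<not> total_colorable 9 V E \<and>
     (\<forall>(VH :: nat set) EH. simple_graph VH EH \<and> planar VH EH \<and> max_degree_le 8 VH EH \<and>
        \<not> has_4fan VH EH \<and> card VH + card EH < card V + card E \<longrightarrow> total_colorable 9 VH EH)"

end

theory Submission imports Defs begin
lemma sg_finite_E: "simple_graph V E \<Longrightarrow> finite E"
proof -
  assume "simple_graph V E"
  then have "finite V" "E \<subseteq> Pow V" unfolding simple_graph_def by auto
  then show "finite E" using finite_subset[of E "Pow V"] by simp
qed

lemma sg_edge: "simple_graph V E \<Longrightarrow> e \<in> E \<Longrightarrow> q \<in> e \<Longrightarrow> \<exists>r. e = {q, r} \<and> r \<noteq> q \<and> r \<in> V \<and> q \<in> V"
proof -
  assume a: "simple_graph V E" "e \<in> E" "q \<in> e"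
  then have "card e = 2" "e \<subseteq> V" unfolding simple_graph_def by auto
  then obtain a b where ab: "e = {a, b}" "a \<noteq> b" unfolding card_2_iff by auto
  show ?thesis
  proof (cases "q = a")
    case True then show ?thesis using ab \<open>e \<subseteq> V\<close> by (intro exI[of _ b]) auto
  next
    case False then have "q = b" using a(3) ab by auto
    then show ?thesis using ab \<open>e \<subseteq> V\<close> by (intro exI[of _ a]) auto
  qed
qed

lemma sg_edge2: "simple_graph V E \<Longrightarrow> {a, b} \<in> E \<Longrightarrow> a \<noteq> b \<and> a \<in> V \<and> b \<in> V"
proof -
  assume "simple_graph V E" "{a, b} \<in> E"
  then have "card {a, b} = 2" "{a,b} \<subseteq> V" unfolding simple_graph_def by auto
  then show ?thesis by (cases "a = b") auto
qed

lemma sub_simple: "simple_graph V E \<Longrightarrow> E' \<subseteq> E \<Longrightarrow> simple_graph V E'"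
  unfolding simple_graph_def by blast

lemma sub_planar: "planar V E \<Longrightarrow> E' \<subseteq> E \<Longrightarrow> planar V E'"
proof -
  assume "planar V E" "E' \<subseteq> E"
  then obtain pos :: "'a \<Rightarrow> real^2" and g :: "'a set \<Rightarrow> real \<Rightarrow> real^2" where
      p1: "inj_on pos V" and
      p2: "\<forall>e\<in>E. arc (g e) \<and> {pathstart (g e), pathfinish (g e)} = pos ` e \<and>
                 path_image (g e) \<inter> pos ` V = pos ` e" and
      p3: "\<forall>e\<in>E. \<forall>e'\<in>E. e \<noteq> e' \<longrightarrow> path_image (g e) \<inter> path_image (g e') \<subseteq> pos ` (e \<inter> e')"
      unfolding planar_def by blast
  show ?thesis unfolding planar_def
    apply (rule exI[of _ pos], rule exI[of _ g])
    using p1 p2 p3 \<open>E' \<subseteq> E\<close> by (simp add: subset_iff)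
qed

lemma sub_maxdeg: "finite V \<Longrightarrow> max_degree_le k V E \<Longrightarrow> E' \<subseteq> E \<Longrightarrow> max_degree_le k V E'"
  unfolding max_degree_le_def degree_def
proof (intro ballI)
  fix v assume "finite V" "\<forall>v\<in>V. card {u \<in> V. {u, v} \<in> E} \<le> k" "E' \<subseteq> E" "v \<in> V"
  then have "card {u \<in> V. {u, v} \<in> E'} \<le> card {u \<in> V. {u, v} \<in> E}"
    by (intro card_mono) auto
  then show "card {u \<in> V. {u, v} \<in> E'} \<le> k" using \<open>\<forall>v\<in>V. _ \<le> k\<close> \<open>v \<in> V\<close> by fastforce
qed

lemma sub_fan: "\<not> has_4fan V E \<Longrightarrow> E' \<subseteq> E \<Longrightarrow> \<not> has_4fan V E'"
  unfolding has_4fan_def by blast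

lemma transfer_nat:
  fixes V :: "'a set" and E :: "'a set set"
  assumes sg: "simple_graph V E" and pl: "planar V E" and md: "max_degree_le 8 V E"
    and nf: "\<not> has_4fan V E"
    and hyp: "\<forall>(VH :: nat set) EH. simple_graph VH EH \<and> planar VH EH \<and> max_degree_le 8 VH EH \<and>
        \<not> has_4fan VH EH \<and> card VH + card EH < N \<longrightarrow> total_colorable 9 VH EH"
    and lt: "card V + card E < N"
  shows "total_colorable 9 V E"
proof -
  have fV: "finite V" using sg unfolding simple_graph_def by blast
  have EP: "E \<subseteq> Pow V" using sg unfolding simple_graph_def by blast
  obtain f :: "'a \<Rightarrow> nat" where inj: "inj_on f V"
    using finite_imp_inj_to_nat_seg[OF fV] by blast
  have injP: "inj_on (image f) (Pow V)" using inj_on_image_Pow[OF inj] .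
  have injE: "inj_on (image f) E" using inj_on_subset[OF injP EP] .
  define VH where "VH = f ` V"
  define EH where "EH = image f ` E"
  have memE: "f ` A \<in> EH \<longleftrightarrow> A \<in> E" if "A \<subseteq> V" for A
    unfolding EH_def using inj_on_image_mem_iff[OF injP, of A E] that EP by blast
  have memE2: "{f a, f b} \<in> EH \<longleftrightarrow> {a, b} \<in> E" if "a \<in> V" "b \<in> V" for a b
    using memE[of "{a,b}"] that by simp
  have sgH: "simple_graph VH EH"
    unfolding simple_graph_def VH_def EH_def
  proof (rule conjI, simp add: fV, intro ballI)
    fix e' assume "e' \<in> image f ` E"
    then obtain e where e: "e \<in> E" "e' = f ` e" by blast
    then have "e \<subseteq> V" "card e = 2" using sg unfolding simple_graph_def by blast+
    then show "e' \<subseteq> f ` V \<and> card e' = 2" using e inj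
      by (metis card_image image_mono inj_on_subset)
  qed
  have cardH: "card VH + card EH = card V + card E"
    unfolding VH_def EH_def using card_image[OF inj] card_image[OF injE] by simp
  have degH: "degree VH EH (f q) = degree V E q" if "q \<in> V" for q
  proof -
    have "{u \<in> VH. {u, f q} \<in> EH} = f ` {u \<in> V. {u, q} \<in> E}"
      unfolding VH_def using memE2 that by auto
    then show ?thesis unfolding degree_def
      by (metis (no_types, lifting) card_image inj mem_Collect_eq inj_on_subset subsetI)
  qed
  have mdH: "max_degree_le 8 VH EH"
    using md degH unfolding max_degree_le_def VH_def by auto
  have nfH: "\<not> has_4fan VH EH"
  proof
    assume "has_4fan VH EH"
    then obtain c u1 u2 u3 u4 u5 where H: "distinct [c, u1, u2, u3, u4, u5]"
      "{c, u1, u2, u3, u4, u5} \<subseteq> VH"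
      "{c, u1} \<in> EH" "{c, u2} \<in> EH" "{c, u3} \<in> EH" "{c, u4} \<in> EH" "{c, u5} \<in> EH"
      "{u1, u2} \<in> EH" "{u2, u3} \<in> EH" "{u3, u4} \<in> EH" "{u4, u5} \<in> EH"
      unfolding has_4fan_def by blast
    obtain c' u1' u2' u3' u4' u5' where P: "c' \<in> V" "u1' \<in> V" "u2' \<in> V" "u3' \<in> V" "u4' \<in> V" "u5' \<in> V"
      "c = f c'" "u1 = f u1'" "u2 = f u2'" "u3 = f u3'" "u4 = f u4'" "u5 = f u5'"
      using H(2) unfolding VH_def by (metis image_iff insert_subset)
    have "has_4fan V E"
      unfolding has_4fan_def
      apply (rule exI[of _ c'], rule exI[of _ u1'], rule exI[of _ u2'], rule exI[of _ u3'], rule exI[of _ u4'], rule exI[of _ u5'])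
      using H P memE2 by auto
    then show False using nf by blast
  qed
  have plH: "planar VH EH"
  proof -
    obtain pos :: "'a \<Rightarrow> real^2" and g :: "'a set \<Rightarrow> real \<Rightarrow> real^2" where
      p1: "inj_on pos V" and
      p2: "\<forall>e\<in>E. arc (g e) \<and> {pathstart (g e), pathfinish (g e)} = pos ` e \<and>
                 path_image (g e) \<inter> pos ` V = pos ` e" and
      p3: "\<forall>e\<in>E. \<forall>e'\<in>E. e \<noteq> e' \<longrightarrow> path_image (g e) \<inter> path_image (g e') \<subseteq> pos ` (e \<inter> e')"
      using pl unfolding planar_def by blast
    define pos' where "pos' = pos \<circ> inv_into V f"
    define g' where "g' = (\<lambda>e'. g (inv_into E (image f) e'))"
    have pa: "pos' (f a) = pos a" if "a \<in> V" for a
      unfolding pos'_def using inv_into_f_f[OF inj that] by simp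
    have pA: "pos' ` (f ` A) = pos ` A" if "A \<subseteq> V" for A
      using pa that by (auto simp: image_iff) (metis subsetD)+
    have ge: "g' (f ` e) = g e" if "e \<in> E" for e
      unfolding g'_def using inv_into_f_f[OF injE that] by simp
    have q1: "inj_on pos' VH" unfolding VH_def inj_on_def using pa p1
        by (auto simp: inj_on_def)
    have q2: "arc (g' e') \<and> {pathstart (g' e'), pathfinish (g' e')} = pos' ` e' \<and>
                 path_image (g' e') \<inter> pos' ` VH = pos' ` e'" if eH: "e' \<in> EH" for e'
    proof -
      obtain e where e: "e \<in> E" "e' = f ` e" using eH unfolding EH_def by blast
      have eV: "e \<subseteq> V" using e EP by blast
      show ?thesis
        unfolding e(2) ge[OF e(1)] pA[OF eV] VH_def pA[OF subset_refl] using p2 e(1) by blast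
    qed
    have q3: "path_image (g' e1') \<inter> path_image (g' e2') \<subseteq> pos' ` (e1' \<inter> e2')"
      if eH: "e1' \<in> EH" "e2' \<in> EH" "e1' \<noteq> e2'" for e1' e2'
    proof -
      obtain e1 e2 where e: "e1 \<in> E" "e1' = f ` e1" "e2 \<in> E" "e2' = f ` e2" using eH unfolding EH_def by blast
      have eV: "e1 \<subseteq> V" "e2 \<subseteq> V" using e EP by blast+
      have "e1 \<noteq> e2" using e eH by blast
      have "f ` e1 \<inter> f ` e2 = f ` (e1 \<inter> e2)" using inj_on_image_Int[OF inj eV] by simp
      moreover have "pos' ` f ` (e1 \<inter> e2) = pos ` (e1 \<inter> e2)" using pA[of "e1 \<inter> e2"] eV by blast
      moreover have "path_image (g e1) \<inter> path_image (g e2) \<subseteq> pos ` (e1 \<inter> e2)"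
        using p3 e(1,3) \<open>e1 \<noteq> e2\<close> by blast
      ultimately show ?thesis
        unfolding e(2,4) ge[OF e(1)] ge[OF e(3)] by simp
    qed
    show ?thesis unfolding planar_def
      by (rule exI[of _ pos'], rule exI[of _ g']) (use q1 q2 q3 in blast)
  qed
  have "total_colorable 9 VH EH" using hyp sgH plH mdH nfH cardH lt by auto
  then obtain cv ce where tc: "total_coloring 9 VH EH cv ce" unfolding total_colorable_def by blast
  have "total_coloring 9 V E (cv \<circ> f) (ce \<circ> image f)"
    unfolding total_coloring_def
  proof (intro conjI allI ballI impI)
    fix v assume "v \<in> V" then show "(cv \<circ> f) v \<in> {1..9}" using tc unfolding total_coloring_def VH_def by auto
  next
    fix e assume "e \<in> E" then show "(ce \<circ> image f) e \<in> {1..9}" using tc unfolding total_coloring_def EH_def by auto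
  next
    fix u v assume "{u, v} \<in> E"
    then have "{f u, f v} \<in> EH" unfolding EH_def by (metis image_empty image_eqI image_insert)
    then show "(cv \<circ> f) u \<noteq> (cv \<circ> f) v" using tc unfolding total_coloring_def by auto
  next
    fix e e' assume a: "e \<in> E" "e' \<in> E" "e \<noteq> e' \<and> e \<inter> e' \<noteq> {}"
    then have "f ` e \<noteq> f ` e'" using injE by (meson inj_on_contraD)
    moreover have "f ` e \<inter> f ` e' \<noteq> {}" using a by blast
    moreover have "f ` e \<in> EH" "f ` e' \<in> EH" using a unfolding EH_def by blast+
    ultimately show "(ce \<circ> image f) e \<noteq> (ce \<circ> image f) e'" using tc unfolding total_coloring_def by auto
  next
    fix e v assume "e \<in> E" "v \<in> e"
    moreover have "f ` e \<in> EH" using \<open>e \<in> E\<close> unfolding EH_def by blast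
    ultimately show "(cv \<circ> f) v \<noteq> (ce \<circ> image f) e" using tc unfolding total_coloring_def by auto
  qed
  then show ?thesis unfolding total_colorable_def by blast
qed

definition LOK :: "'c \<Rightarrow> 'c \<Rightarrow> 'c \<Rightarrow> 'c \<Rightarrow> 'c \<Rightarrow> 'c \<Rightarrow> 'c \<Rightarrow> 'c \<Rightarrow> 'c \<Rightarrow> 'c \<Rightarrow> 'c \<Rightarrow> 'c
  \<Rightarrow> 'c \<Rightarrow> 'c \<Rightarrow> 'c \<Rightarrow> 'c \<Rightarrow> 'c \<Rightarrow> 'c \<Rightarrow> 'c \<Rightarrow> 'c \<Rightarrow> 'c \<Rightarrow> 'c \<Rightarrow> 'c \<Rightarrow> 'c \<Rightarrow> bool" where
 "LOK a ex et ew ez eu hx hw fw fp gp gu nvx nvt nvw nvy nvz nvu nxt ntw nwy nyp npz nzu \<longleftrightarrow>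
   distinct [nvx, nvt, nvw, nvy, nvz, nvu] \<and> {nvx, nvt, nvw, nvy, nvz, nvu} \<subseteq> {a, ex, et, ew, ez, eu} \<and>
   nvx \<in> {ex, hx} \<and> nxt \<in> {ex, hx} \<and> nvx \<noteq> nxt \<and>
   nvu \<in> {eu, gu} \<and> nzu \<in> {eu, gu} \<and> nvu \<noteq> nzu \<and>
   nvw \<in> {ew, hw, fw} \<and> ntw \<in> {ew, hw, fw} \<and> nwy \<in> {ew, hw, fw} \<and> distinct [nvw, ntw, nwy] \<and>
   nyp \<in> {fp, gp} \<and> npz \<in> {fp, gp} \<and> nyp \<noteq> npz \<and>
   distinct [nvt, nxt, ntw] \<and> distinct [nvy, nwy, nyp] \<and> distinct [nvz, npz, nzu]"

lemma comb_disj: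
  fixes a ex et ew ez eu hx hw fw fp gp gu :: 'c
  assumes "distinct [a, ex, et, ew, ez, eu]"
    "hx \<noteq> ex" "hx \<noteq> et" "hw \<noteq> et" "hw \<noteq> ew" "hw \<noteq> hx" "fw \<noteq> ew" "fw \<noteq> hw"
    "fp \<noteq> fw" "gp \<noteq> fp" "gp \<noteq> ez" "gu \<noteq> gp" "gu \<noteq> ez" "gu \<noteq> eu"
  shows "LOK a ex et ew ez eu hx hw fw fp gp gu ex et ew a ez eu hx hw fw fp gp gu \<or>
    LOK a ex et ew ez eu hx hw fw fp gp gu ex et ew ez a eu hx hw fw fp gp gu \<or>
    LOK a ex et ew ez eu hx hw fw fp gp gu ex a ew et ez eu hx hw fw fp gp gu \<or>
    LOK a ex et ew ez eu hx hw fw fp gp gu ex ez ew et a eu hx hw fw fp gp gu \<or>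
    LOK a ex et ew ez eu hx hw fw fp gp gu ex a ew ez et eu hx hw fw fp gp gu \<or>
    LOK a ex et ew ez eu hx hw fw fp gp gu ex et ew ez a eu hx hw fw gp fp gu \<or>
    LOK a ex et ew ez eu hx hw fw fp gp gu ex et ew a ez eu hx hw fw gp fp gu \<or>
    LOK a ex et ew ez eu hx hw fw fp gp gu ex et ew a ez eu hx fw hw fp gp gu \<or>
    LOK a ex et ew ez eu hx hw fw fp gp gu ex a ew et ez eu hx fw hw fp gp gu \<or>
    LOK a ex et ew ez eu hx hw fw fp gp gu ex et ew eu ez gu hx hw fw fp gp eu \<or>
    LOK a ex et ew ez eu hx hw fw fp gp gu hx et ew ex ez eu ex hw fw fp gp gu \<or>
    LOK a ex et ew ez eu hx hw fw fp gp gu ex et fw ew ez eu hx ew hw fp gp gu \<or>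
    LOK a ex et ew ez eu hx hw fw fp gp gu ex eu ew ez et gu hx hw fw gp fp eu \<or>
    LOK a ex et ew ez eu hx hw fw fp gp gu ex et hw ew ez eu hx ew fw fp gp gu \<or>
    LOK a ex et ew ez eu hx hw fw fp gp gu hx ez hw et ew eu ex ew fw fp gp gu \<or>
    LOK a ex et ew ez eu hx hw fw fp gp gu ex et hw ez ew eu hx fw ew fp gp gu \<or>
    LOK a ex et ew ez eu hx hw fw fp gp gu ex et fw eu ez gu hx ew hw gp fp eu \<or>
    LOK a ex et ew ez eu hx hw fw fp gp gu ex et hw ew ez gu hx ew fw gp fp eu"
  using assms unfolding LOK_def by (simp only: distinct.simps list.set insert_iff empty_iff insert_subset empty_subsetI simp_thms) (smt (z3))

lemma comb_ex:
  fixes a ex et ew ez eu hx hw fw fp gp gu :: 'c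
  assumes "distinct [a, ex, et, ew, ez, eu]"
    "hx \<noteq> ex" "hx \<noteq> et" "hw \<noteq> et" "hw \<noteq> ew" "hw \<noteq> hx" "fw \<noteq> ew" "fw \<noteq> hw"
    "fp \<noteq> fw" "gp \<noteq> fp" "gp \<noteq> ez" "gu \<noteq> gp" "gu \<noteq> ez" "gu \<noteq> eu"
  shows "\<exists>nvx nvt nvw nvy nvz nvu nxt ntw nwy nyp npz nzu.
     LOK a ex et ew ez eu hx hw fw fp gp gu nvx nvt nvw nvy nvz nvu nxt ntw nwy nyp npz nzu"
  using comb_disj[OF assms] by blast
lemma free_color_set: "finite S \<Longrightarrow> card S < 9 \<Longrightarrow> \<exists>c\<in>{1..9::nat}. c \<notin> S"
proof (rule ccontr)
  assume "finite S" "card S < 9" "\<not> (\<exists>c\<in>{1..9::nat}. c \<notin> S)"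
  then have "{1..9::nat} \<subseteq> S" by blast
  then have "card {1..9::nat} \<le> card S" using \<open>finite S\<close> by (rule card_mono[rotated])
  then show False using \<open>card S < 9\<close> by simp
qed

lemma free_color: "length xs < 9 \<Longrightarrow> \<exists>c\<in>{1..9::nat}. c \<notin> set xs"
  using free_color_set[of "set xs"] card_length[of xs] by simp

lemma vertex_ok:
  fixes c cold :: "'a \<Rightarrow> nat"
  assumes inj: "\<And>r r'. r \<in> L \<Longrightarrow> r' \<in> L \<Longrightarrow> r \<noteq> r' \<Longrightarrow> c r \<noteq> c r'"
    and inS: "\<And>r. r \<in> L \<Longrightarrow> c r \<in> S"
    and nl: "\<And>r. r \<notin> L \<Longrightarrow> N r \<Longrightarrow> c r = cold r \<and> cold r \<notin> S \<and> cold r \<noteq> k"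
    and old: "\<And>r r'. r \<notin> L \<Longrightarrow> r' \<notin> L \<Longrightarrow> N r \<Longrightarrow> N r' \<Longrightarrow> r \<noteq> r' \<Longrightarrow> cold r \<noteq> cold r'"
    and kS: "k \<notin> S"
  shows "(\<forall>r r'. N r \<longrightarrow> N r' \<longrightarrow> r \<noteq> r' \<longrightarrow> c r \<noteq> c r') \<and> (\<forall>r. N r \<longrightarrow> c r \<noteq> k)"
proof (intro conjI allI impI)
  fix r r' assume "N r" "N r'" "r \<noteq> r'"
  then show "c r \<noteq> c r'"
    by (cases "r \<in> L"; cases "r' \<in> L") (use inj inS nl old in metis)+
next
  fix r assume "N r"
  then show "c r \<noteq> k" by (cases "r \<in> L") (use inS nl kS in metis)+
qed
lemma extend:
  fixes V :: "'a set" and E :: "'a set set"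
  assumes sg: "simple_graph V E"
    and col: "total_coloring 9 V (E - {{v, y}}) cv ce"
    and dist: "distinct [v, x, t, w, y, z, u, p]"
    and E1: "{v, x} \<in> E" "{v, t} \<in> E" "{v, w} \<in> E" "{v, y} \<in> E" "{v, z} \<in> E" "{v, u} \<in> E"
      "{x, t} \<in> E" "{t, w} \<in> E" "{w, y} \<in> E" "{y, p} \<in> E" "{p, z} \<in> E" "{z, u} \<in> E"
    and Nt: "\<And>r. {t, r} \<in> E \<Longrightarrow> r \<in> {x, w, v}"
    and Ny: "\<And>r. {y, r} \<in> E \<Longrightarrow> r \<in> {w, v, p}"
    and Nz: "\<And>r. {z, r} \<in> E \<Longrightarrow> r \<in> {v, u, p}"
    and dv: "card {r \<in> V. {r, v} \<in> E} = 8"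
  shows "total_colorable 9 V E"
proof -
  define E' where "E' = E - {{v, y}}"
  have D: "v \<noteq> x" "v \<noteq> t" "v \<noteq> w" "v \<noteq> y" "v \<noteq> z" "v \<noteq> u" "v \<noteq> p" "x \<noteq> v" "x \<noteq> t" "x \<noteq> w" "x \<noteq> y" "x \<noteq> z" "x \<noteq> u" "x \<noteq> p" "t \<noteq> v" "t \<noteq> x" "t \<noteq> w" "t \<noteq> y" "t \<noteq> z" "t \<noteq> u" "t \<noteq> p" "w \<noteq> v" "w \<noteq> x" "w \<noteq> t" "w \<noteq> y" "w \<noteq> z" "w \<noteq> u" "w \<noteq> p" "y \<noteq> v" "y \<noteq> x" "y \<noteq> t" "y \<noteq> w" "y \<noteq> z" "y \<noteq> u" "y \<noteq> p" "z \<noteq> v" "z \<noteq> x" "z \<noteq> t" "z \<noteq> w" "z \<noteq> y" "z \<noteq> u" "z \<noteq> p" "u \<noteq> v" "u \<noteq> x" "u \<noteq> t" "u \<noteq> w" "u \<noteq> y" "u \<noteq> z" "u \<noteq> p" "p \<noteq> v" "p \<noteq> x" "p \<noteq> t" "p \<noteq> w" "p \<noteq> y" "p \<noteq> z" "p \<noteq> u" using dist by auto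
  have fV: "finite V" using sg unfolding simple_graph_def by blast
  note colu = col[unfolded total_coloring_def, folded E'_def]
  have c1: "\<forall>q\<in>V. cv q \<in> {1..9}" using colu by (rule conjunct1)
  have c2: "\<forall>e\<in>E'. ce e \<in> {1..9}" using colu by (rule conjunct2[THEN conjunct1])
  have c3: "\<forall>a b. {a, b} \<in> E' \<longrightarrow> cv a \<noteq> cv b" using colu by (rule conjunct2[THEN conjunct2, THEN conjunct1])
  have c4: "\<forall>e\<in>E'. \<forall>e'\<in>E'. e \<noteq> e' \<and> e \<inter> e' \<noteq> {} \<longrightarrow> ce e \<noteq> ce e'"
    using colu by (rule conjunct2[THEN conjunct2, THEN conjunct2, THEN conjunct1])
  have c5: "\<forall>e\<in>E'. \<forall>q\<in>e. cv q \<noteq> ce e" using colu by (rule conjunct2[THEN conjunct2, THEN conjunct2, THEN conjunct2])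
  have cvr: "\<And>q. q \<in> V \<Longrightarrow> cv q \<in> {1..9}" using c1 by blast
  have cer: "\<And>e. e \<in> E' \<Longrightarrow> ce e \<in> {1..9}" using c2 by blast
  have adj: "\<And>a b. {a, b} \<in> E' \<Longrightarrow> cv a \<noteq> cv b" using c3 by blast
  have pe: "\<And>e e' q. e \<in> E' \<Longrightarrow> e' \<in> E' \<Longrightarrow> e \<noteq> e' \<Longrightarrow> q \<in> e \<Longrightarrow> q \<in> e' \<Longrightarrow> ce e \<noteq> ce e'"
    using c4 by blast
  have ve: "\<And>e q. e \<in> E' \<Longrightarrow> q \<in> e \<Longrightarrow> cv q \<noteq> ce e" using c5 by blast
  have pe2: "ce {a, b} \<noteq> ce {a, c}" if h: "{a, b} \<in> E'" "{a, c} \<in> E'" "b \<noteq> c" for a b c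
  proof -
    have "{a, b} \<noteq> {a, c}" using h(3) by (auto simp: doubleton_eq_iff)
    then show ?thesis using pe[OF h(1,2)] by blast
  qed
  have ve2: "cv a \<noteq> ce {a, b}" if "{a, b} \<in> E'" for a b using ve[OF that] by blast
  have inE': "{a, b} \<in> E'" if "{a, b} \<in> E" "{a, b} \<noteq> {v, y}" for a b using that unfolding E'_def by blast
  have ELE: "{v, x} \<in> E" "{x, v} \<in> E" "{v, t} \<in> E" "{t, v} \<in> E" "{v, w} \<in> E" "{w, v} \<in> E" "{v, y} \<in> E" "{y, v} \<in> E" "{v, z} \<in> E" "{z, v} \<in> E" "{v, u} \<in> E" "{u, v} \<in> E" "{x, t} \<in> E" "{t, x} \<in> E" "{t, w} \<in> E" "{w, t} \<in> E" "{w, y} \<in> E" "{y, w} \<in> E" "{y, p} \<in> E" "{p, y} \<in> E" "{p, z} \<in> E" "{z, p} \<in> E" "{z, u} \<in> E" "{u, z} \<in> E" using E1 by (simp_all add: insert_commute)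
  have EL: "{v, x} \<in> E'" "{x, v} \<in> E'" "{v, t} \<in> E'" "{t, v} \<in> E'" "{v, w} \<in> E'" "{w, v} \<in> E'" "{v, z} \<in> E'" "{z, v} \<in> E'" "{v, u} \<in> E'" "{u, v} \<in> E'" "{x, t} \<in> E'" "{t, x} \<in> E'" "{t, w} \<in> E'" "{w, t} \<in> E'" "{w, y} \<in> E'" "{y, w} \<in> E'" "{y, p} \<in> E'" "{p, y} \<in> E'" "{p, z} \<in> E'" "{z, p} \<in> E'" "{z, u} \<in> E'" "{u, z} \<in> E'" using ELE D unfolding E'_def by (auto simp: doubleton_eq_iff)
  define Ev where "Ev = {e \<in> E'. v \<in> e}"
  have Evsub: "Ev \<subseteq> (\<lambda>r. {v, r}) ` ({r \<in> V. {r, v} \<in> E} - {y})"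
  proof
    fix e assume "e \<in> Ev"
    then have e: "e \<in> E" "v \<in> e" "e \<noteq> {v, y}" unfolding Ev_def E'_def by auto
    then obtain r where r: "e = {v, r}" "r \<in> V" using sg_edge[OF sg e(1) e(2)] by blast
    have "r \<noteq> y" using e(3) r(1) by blast
    moreover have "{r, v} \<in> E" using e(1) r(1) by (simp add: insert_commute)
    ultimately show "e \<in> (\<lambda>r. {v, r}) ` ({r \<in> V. {r, v} \<in> E} - {y})" using r by blast
  qed
  have yN: "y \<in> {r \<in> V. {r, v} \<in> E}" using ELE sg_edge2[OF sg E1(4)] by simp
  have finN: "finite {r \<in> V. {r, v} \<in> E}" using fV by simp
  have cN: "card ({r \<in> V. {r, v} \<in> E} - {y}) = 7" using card_Diff_singleton[OF yN] dv by simp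
  have finEv: "finite Ev" using Evsub finN by (meson finite_Diff finite_imageI finite_subset)
  have cEv: "card Ev \<le> 7"
    using card_mono[OF _ Evsub] card_image_le[of "{r \<in> V. {r, v} \<in> E} - {y}" "\<lambda>r. {v, r}"] finN cN
    by simp
  have "card (ce ` Ev) \<le> 7" using card_image_le[OF finEv, of ce] cEv by simp
  then have "card (insert (cv v) (ce ` Ev)) < 9" using finEv by (simp add: card_insert_if)
  then obtain \<alpha> where a: "\<alpha> \<in> {1..9}" "\<alpha> \<notin> insert (cv v) (ce ` Ev)"
    using free_color_set[of "insert (cv v) (ce ` Ev)"] finEv by blast
  have aV: "\<alpha> \<noteq> cv v" using a by blast
  have aE: "\<alpha> \<noteq> ce {v, r}" if "{v, r} \<in> E'" for r using a(2) that unfolding Ev_def by blast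
  define ex where "ex = ce {v, x}"
  define et where "et = ce {v, t}"
  define ew where "ew = ce {v, w}"
  define ez where "ez = ce {v, z}"
  define eu where "eu = ce {v, u}"
  define hx where "hx = ce {x, t}"
  define hw where "hw = ce {t, w}"
  define fw where "fw = ce {w, y}"
  define fp where "fp = ce {y, p}"
  define gp where "gp = ce {p, z}"
  define gu where "gu = ce {z, u}"
  have OLDF: "ce {v, x} = ex" "ce {x, v} = ex" "ce {v, t} = et" "ce {t, v} = et" "ce {v, w} = ew" "ce {w, v} = ew" "ce {v, z} = ez" "ce {z, v} = ez" "ce {v, u} = eu" "ce {u, v} = eu" "ce {x, t} = hx" "ce {t, x} = hx" "ce {t, w} = hw" "ce {w, t} = hw" "ce {w, y} = fw" "ce {y, w} = fw" "ce {y, p} = fp" "ce {p, y} = fp" "ce {p, z} = gp" "ce {z, p} = gp" "ce {z, u} = gu" "ce {u, z} = gu" unfolding ex_def et_def ew_def ez_def eu_def hx_def hw_def fw_def fp_def gp_def gu_def by (simp_all add: insert_commute)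
  have "hx \<noteq> ex" using EL D OLDF pe2[of x t v] by simp
  have "hx \<noteq> et" using EL D OLDF pe2[of t x v] by simp
  have "hw \<noteq> et" using EL D OLDF pe2[of t w v] by simp
  have "hw \<noteq> ew" using EL D OLDF pe2[of w t v] by simp
  have "hw \<noteq> hx" using EL D OLDF pe2[of t w x] by simp
  have "fw \<noteq> ew" using EL D OLDF pe2[of w y v] by simp
  have "fw \<noteq> hw" using EL D OLDF pe2[of w y t] by simp
  have "fp \<noteq> fw" using EL D OLDF pe2[of y p w] by simp
  have "gp \<noteq> fp" using EL D OLDF pe2[of p z y] by simp
  have "gp \<noteq> ez" using EL D OLDF pe2[of z p v] by simp
  have "gu \<noteq> gp" using EL D OLDF pe2[of z u p] by simp
  have "gu \<noteq> ez" using EL D OLDF pe2[of z u v] by simp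
  have "gu \<noteq> eu" using EL D OLDF pe2[of u z v] by simp
  have "ex \<noteq> et" using EL D OLDF pe2[of v x t] by simp
  have "ex \<noteq> ew" using EL D OLDF pe2[of v x w] by simp
  have "ex \<noteq> ez" using EL D OLDF pe2[of v x z] by simp
  have "ex \<noteq> eu" using EL D OLDF pe2[of v x u] by simp
  have "et \<noteq> ew" using EL D OLDF pe2[of v t w] by simp
  have "et \<noteq> ez" using EL D OLDF pe2[of v t z] by simp
  have "et \<noteq> eu" using EL D OLDF pe2[of v t u] by simp
  have "ew \<noteq> ez" using EL D OLDF pe2[of v w z] by simp
  have "ew \<noteq> eu" using EL D OLDF pe2[of v w u] by simp
  have "ez \<noteq> eu" using EL D OLDF pe2[of v z u] by simp
  have "\<alpha> \<noteq> ex" using EL OLDF aE[of x] by simp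
  have "\<alpha> \<noteq> et" using EL OLDF aE[of t] by simp
  have "\<alpha> \<noteq> ew" using EL OLDF aE[of w] by simp
  have "\<alpha> \<noteq> ez" using EL OLDF aE[of z] by simp
  have "\<alpha> \<noteq> eu" using EL OLDF aE[of u] by simp
  have dA: "distinct [\<alpha>, ex, et, ew, ez, eu]" using \<open>\<alpha> \<noteq> ex\<close> \<open>\<alpha> \<noteq> et\<close> \<open>\<alpha> \<noteq> ew\<close> \<open>\<alpha> \<noteq> ez\<close> \<open>\<alpha> \<noteq> eu\<close>
    \<open>ex \<noteq> et\<close> \<open>ex \<noteq> ew\<close> \<open>ex \<noteq> ez\<close> \<open>ex \<noteq> eu\<close> \<open>et \<noteq> ew\<close> \<open>et \<noteq> ez\<close> \<open>et \<noteq> eu\<close>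
    \<open>ew \<noteq> ez\<close> \<open>ew \<noteq> eu\<close> \<open>ez \<noteq> eu\<close> by (simp only: distinct.simps list.set insert_iff empty_iff simp_thms)
  obtain nvx nvt nvw nvy nvz nvu nxt ntw nwy nyp npz nzu where
    LOK: "LOK \<alpha> ex et ew ez eu hx hw fw fp gp gu nvx nvt nvw nvy nvz nvu nxt ntw nwy nyp npz nzu"
    using comb_ex[OF dA \<open>hx \<noteq> ex\<close> \<open>hx \<noteq> et\<close> \<open>hw \<noteq> et\<close> \<open>hw \<noteq> ew\<close>
      \<open>hw \<noteq> hx\<close> \<open>fw \<noteq> ew\<close> \<open>fw \<noteq> hw\<close> \<open>fp \<noteq> fw\<close> \<open>gp \<noteq> fp\<close> \<open>gp \<noteq> ez\<close> \<open>gu \<noteq> gp\<close> \<open>gu \<noteq> ez\<close> \<open>gu \<noteq> eu\<close>]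
    by (elim exE)
  note Lall = LOK[unfolded LOK_def]
  have Ld: "distinct [nvx, nvt, nvw, nvy, nvz, nvu]" by (insert Lall) (elim conjE, assumption)
  have Lsub: "{nvx, nvt, nvw, nvy, nvz, nvu} \<subseteq> {\<alpha>, ex, et, ew, ez, eu}" by (insert Lall) (elim conjE, assumption)
  have Lx1: "nvx \<in> {ex, hx}" by (insert Lall) (elim conjE, assumption)
  have Lx2: "nxt \<in> {ex, hx}" by (insert Lall) (elim conjE, assumption)
  have Lx3: "nvx \<noteq> nxt" by (insert Lall) (elim conjE, assumption)
  have Lu1: "nvu \<in> {eu, gu}" by (insert Lall) (elim conjE, assumption)
  have Lu2: "nzu \<in> {eu, gu}" by (insert Lall) (elim conjE, assumption)
  have Lu3: "nvu \<noteq> nzu" by (insert Lall) (elim conjE, assumption)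
  have Lw1: "nvw \<in> {ew, hw, fw}" by (insert Lall) (elim conjE, assumption)
  have Lw2: "ntw \<in> {ew, hw, fw}" by (insert Lall) (elim conjE, assumption)
  have Lw3: "nwy \<in> {ew, hw, fw}" by (insert Lall) (elim conjE, assumption)
  have Lw4: "distinct [nvw, ntw, nwy]" by (insert Lall) (elim conjE, assumption)
  have Lp1: "nyp \<in> {fp, gp}" by (insert Lall) (elim conjE, assumption)
  have Lp2: "npz \<in> {fp, gp}" by (insert Lall) (elim conjE, assumption)
  have Lp3: "nyp \<noteq> npz" by (insert Lall) (elim conjE, assumption)
  have Lt: "distinct [nvt, nxt, ntw]" by (insert Lall) (elim conjE, assumption)
  have Ly: "distinct [nvy, nwy, nyp]" by (insert Lall) (elim conjE, assumption)
  have Lz: "distinct [nvz, npz, nzu]" by (insert Lall) (elim conjE, assumption)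
  have Lsv: "nvx \<in> {\<alpha>, ex, et, ew, ez, eu}" "nvt \<in> {\<alpha>, ex, et, ew, ez, eu}" "nvw \<in> {\<alpha>, ex, et, ew, ez, eu}"
    "nvy \<in> {\<alpha>, ex, et, ew, ez, eu}" "nvz \<in> {\<alpha>, ex, et, ew, ez, eu}" "nvu \<in> {\<alpha>, ex, et, ew, ez, eu}"
    using Lsub by (simp_all only: insert_subset)
  note Lx = Lx1 Lx2 Lx3
  note Lu = Lu1 Lu2 Lu3
  note Lw = Lw1 Lw2 Lw3 Lw4
  note Lp = Lp1 Lp2 Lp3
  have or_ex: "ex \<in> {1..9}" unfolding ex_def by (rule cer[OF EL(1)])
  have or_et: "et \<in> {1..9}" unfolding et_def by (rule cer[OF EL(3)])
  have or_ew: "ew \<in> {1..9}" unfolding ew_def by (rule cer[OF EL(5)])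
  have or_ez: "ez \<in> {1..9}" unfolding ez_def by (rule cer[OF EL(7)])
  have or_eu: "eu \<in> {1..9}" unfolding eu_def by (rule cer[OF EL(9)])
  have or_hx: "hx \<in> {1..9}" unfolding hx_def by (rule cer[OF EL(11)])
  have or_hw: "hw \<in> {1..9}" unfolding hw_def by (rule cer[OF EL(13)])
  have or_fw: "fw \<in> {1..9}" unfolding fw_def by (rule cer[OF EL(15)])
  have or_fp: "fp \<in> {1..9}" unfolding fp_def by (rule cer[OF EL(17)])
  have or_gp: "gp \<in> {1..9}" unfolding gp_def by (rule cer[OF EL(19)])
  have or_gu: "gu \<in> {1..9}" unfolding gu_def by (rule cer[OF EL(21)])
  note oldr = or_ex or_et or_ew or_ez or_eu or_hx or_hw or_fw or_fp or_gp or_gu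
  have nr_nvx: "nvx \<in> {1..9}" using Lx1 oldr by (auto simp del: atLeastAtMost_iff)
  have nr_nvt: "nvt \<in> {\<alpha>, ex, et, ew, ez, eu}" using Lsub by blast
  then have nr_nvt: "nvt \<in> {1..9}" using oldr a(1) by (auto simp del: atLeastAtMost_iff)
  have nr_nvw: "nvw \<in> {1..9}" using Lw1 oldr by (auto simp del: atLeastAtMost_iff)
  have nr_nvy: "nvy \<in> {\<alpha>, ex, et, ew, ez, eu}" using Lsub by blast
  then have nr_nvy: "nvy \<in> {1..9}" using oldr a(1) by (auto simp del: atLeastAtMost_iff)
  have nr_nvz: "nvz \<in> {\<alpha>, ex, et, ew, ez, eu}" using Lsub by blast
  then have nr_nvz: "nvz \<in> {1..9}" using oldr a(1) by (auto simp del: atLeastAtMost_iff)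
  have nr_nvu: "nvu \<in> {1..9}" using Lu1 oldr by (auto simp del: atLeastAtMost_iff)
  have nr_nxt: "nxt \<in> {1..9}" using Lx2 oldr by (auto simp del: atLeastAtMost_iff)
  have nr_ntw: "ntw \<in> {1..9}" using Lw2 oldr by (auto simp del: atLeastAtMost_iff)
  have nr_nwy: "nwy \<in> {1..9}" using Lw3 oldr by (auto simp del: atLeastAtMost_iff)
  have nr_nyp: "nyp \<in> {1..9}" using Lp1 oldr by (auto simp del: atLeastAtMost_iff)
  have nr_npz: "npz \<in> {1..9}" using Lp2 oldr by (auto simp del: atLeastAtMost_iff)
  have nr_nzu: "nzu \<in> {1..9}" using Lu2 oldr by (auto simp del: atLeastAtMost_iff)
  note newr = nr_nvx nr_nvt nr_nvw nr_nvy nr_nvz nr_nvu nr_nxt nr_ntw nr_nwy nr_nyp nr_npz nr_nzu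
  define LS where "LS = {{v, x}, {v, t}, {v, w}, {v, y}, {v, z}, {v, u}, {x, t}, {t, w}, {w, y}, {y, p}, {p, z}, {z, u}}"
  define ce2 where "ce2 = (\<lambda>e. if e = {v, x} then nvx else if e = {v, t} then nvt else if e = {v, w} then nvw else if e = {v, y} then nvy else if e = {v, z} then nvz else if e = {v, u} then nvu else if e = {x, t} then nxt else if e = {t, w} then ntw else if e = {w, y} then nwy else if e = {y, p} then nyp else if e = {p, z} then npz else if e = {z, u} then nzu else ce e)"
  have CE2: "ce2 {v, x} = nvx" "ce2 {x, v} = nvx" "ce2 {v, t} = nvt" "ce2 {t, v} = nvt" "ce2 {v, w} = nvw" "ce2 {w, v} = nvw" "ce2 {v, y} = nvy" "ce2 {y, v} = nvy" "ce2 {v, z} = nvz" "ce2 {z, v} = nvz" "ce2 {v, u} = nvu" "ce2 {u, v} = nvu" "ce2 {x, t} = nxt" "ce2 {t, x} = nxt" "ce2 {t, w} = ntw" "ce2 {w, t} = ntw" "ce2 {w, y} = nwy" "ce2 {y, w} = nwy" "ce2 {y, p} = nyp" "ce2 {p, y} = nyp" "ce2 {p, z} = npz" "ce2 {z, p} = npz" "ce2 {z, u} = nzu" "ce2 {u, z} = nzu" unfolding ce2_def using D by (simp_all add: doubleton_eq_iff)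
  have NL: "ce2 e = ce e" if "e \<notin> LS" for e using that unfolding ce2_def LS_def by auto
  obtain ct where ct: "ct \<in> {1..9}" "ct \<notin> set [cv x, cv w, cv v, nxt, ntw, nvt]"
    using free_color[of "[cv x, cv w, cv v, nxt, ntw, nvt]"] by auto
  obtain cy where cy: "cy \<in> {1..9}" "cy \<notin> set [cv w, cv v, cv p, nwy, nvy, nyp]"
    using free_color[of "[cv w, cv v, cv p, nwy, nvy, nyp]"] by auto
  obtain cz where cz: "cz \<in> {1..9}" "cz \<notin> set [cv v, cv u, cv p, nvz, npz, nzu]"
    using free_color[of "[cv v, cv u, cv p, nvz, npz, nzu]"] by auto
  define cv2 where "cv2 = cv(t := ct, y := cy, z := cz)"
  let ?K = "\<lambda>q. (\<forall>r r'. {q, r} \<in> E \<longrightarrow> {q, r'} \<in> E \<longrightarrow> r \<noteq> r' \<longrightarrow> ce2 {q, r} \<noteq> ce2 {q, r'}) \<and>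
     (\<forall>r. {q, r} \<in> E \<longrightarrow> ce2 {q, r} \<noteq> cv2 q)"
  have K_v: "?K v"
    apply (rule vertex_ok[where L="{x, t, w, y, z, u}" and S="{\<alpha>, ex, et, ew, ez, eu}" and N="\<lambda>r. {v, r} \<in> E" and c="\<lambda>r. ce2 {v, r}" and cold="\<lambda>r. ce {v, r}"])
    subgoal for r r' using Ld by (auto simp: CE2)
    subgoal for r by (elim insertE emptyE) (simp_all only: CE2 Lsv)
    subgoal for r
    proof -
      assume r: "r \<notin> {x, t, w, y, z, u}" "{v, r} \<in> E"
      have rq: "r \<noteq> v" using sg_edge2[OF sg r(2)] by blast
      have ne: "{v, r} \<notin> LS" unfolding LS_def using r rq D by (auto simp: doubleton_eq_iff)
      have inE: "{v, r} \<in> E'" using inE'[OF r(2)] r rq D by (auto simp: doubleton_eq_iff)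
      have "ce {v, r} \<noteq> ce {v, x}" using pe2[OF inE EL(1)] r(1) by simp
      have "ce {v, r} \<noteq> ce {v, t}" using pe2[OF inE EL(3)] r(1) by simp
      have "ce {v, r} \<noteq> ce {v, w}" using pe2[OF inE EL(5)] r(1) by simp
      have "ce {v, r} \<noteq> ce {v, z}" using pe2[OF inE EL(7)] r(1) by simp
      have "ce {v, r} \<noteq> ce {v, u}" using pe2[OF inE EL(9)] r(1) by simp
      have "ce {v, r} \<noteq> \<alpha>" using aE[OF inE] by simp
      have "ce {v, r} \<noteq> cv v" using ve2[OF inE] by simp
      then show ?thesis using NL[OF ne] D OLDF \<open>ce {v, r} \<noteq> ce {v, x}\<close> \<open>ce {v, r} \<noteq> ce {v, t}\<close> \<open>ce {v, r} \<noteq> ce {v, w}\<close> \<open>ce {v, r} \<noteq> ce {v, z}\<close> \<open>ce {v, r} \<noteq> ce {v, u}\<close> \<open>ce {v, r} \<noteq> \<alpha>\<close> by (simp add: cv2_def)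
    qed
    subgoal for r r'
    proof -
      assume r: "r \<notin> {x, t, w, y, z, u}" "r' \<notin> {x, t, w, y, z, u}" "{v, r} \<in> E" "{v, r'} \<in> E" "r \<noteq> r'"
      have "{v, r} \<in> E'" "{v, r'} \<in> E'" using inE'[OF r(3)] inE'[OF r(4)] r D by (auto simp: doubleton_eq_iff)
      then show ?thesis using pe2 r(5) by blast
    qed
    subgoal using ve2[OF EL(1)] ve2[OF EL(3)] ve2[OF EL(5)] ve2[OF EL(7)] ve2[OF EL(9)] aV D OLDF by (simp add: cv2_def)
    done

  have K_x: "?K x"
    apply (rule vertex_ok[where L="{v, t}" and S="{ex, hx}" and N="\<lambda>r. {x, r} \<in> E" and c="\<lambda>r. ce2 {x, r}" and cold="\<lambda>r. ce {x, r}"])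
    subgoal for r r' using Lx3 by (auto simp: CE2)
    subgoal for r by (elim insertE emptyE) (simp_all only: CE2 Lx1 Lx2)
    subgoal for r
    proof -
      assume r: "r \<notin> {v, t}" "{x, r} \<in> E"
      have rq: "r \<noteq> x" using sg_edge2[OF sg r(2)] by blast
      have ne: "{x, r} \<notin> LS" unfolding LS_def using r rq D by (auto simp: doubleton_eq_iff)
      have inE: "{x, r} \<in> E'" using inE'[OF r(2)] r rq D by (auto simp: doubleton_eq_iff)
      have "ce {x, r} \<noteq> ce {x, v}" using pe2[OF inE EL(2)] r(1) by simp
      have "ce {x, r} \<noteq> ce {x, t}" using pe2[OF inE EL(11)] r(1) by simp
      have "ce {x, r} \<noteq> cv x" using ve2[OF inE] by simp
      then show ?thesis using NL[OF ne] D OLDF \<open>ce {x, r} \<noteq> ce {x, v}\<close> \<open>ce {x, r} \<noteq> ce {x, t}\<close> by (simp add: cv2_def)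
    qed
    subgoal for r r'
    proof -
      assume r: "r \<notin> {v, t}" "r' \<notin> {v, t}" "{x, r} \<in> E" "{x, r'} \<in> E" "r \<noteq> r'"
      have "{x, r} \<in> E'" "{x, r'} \<in> E'" using inE'[OF r(3)] inE'[OF r(4)] r D by (auto simp: doubleton_eq_iff)
      then show ?thesis using pe2 r(5) by blast
    qed
    subgoal using ve2[OF EL(2)] ve2[OF EL(11)] D OLDF by (simp add: cv2_def)
    done

  have K_w: "?K w"
    apply (rule vertex_ok[where L="{v, t, y}" and S="{ew, hw, fw}" and N="\<lambda>r. {w, r} \<in> E" and c="\<lambda>r. ce2 {w, r}" and cold="\<lambda>r. ce {w, r}"])
    subgoal for r r' using Lw4 by (auto simp: CE2)
    subgoal for r by (elim insertE emptyE) (simp_all only: CE2 Lw1 Lw2 Lw3)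
    subgoal for r
    proof -
      assume r: "r \<notin> {v, t, y}" "{w, r} \<in> E"
      have rq: "r \<noteq> w" using sg_edge2[OF sg r(2)] by blast
      have ne: "{w, r} \<notin> LS" unfolding LS_def using r rq D by (auto simp: doubleton_eq_iff)
      have inE: "{w, r} \<in> E'" using inE'[OF r(2)] r rq D by (auto simp: doubleton_eq_iff)
      have "ce {w, r} \<noteq> ce {w, v}" using pe2[OF inE EL(6)] r(1) by simp
      have "ce {w, r} \<noteq> ce {w, t}" using pe2[OF inE EL(14)] r(1) by simp
      have "ce {w, r} \<noteq> ce {w, y}" using pe2[OF inE EL(15)] r(1) by simp
      have "ce {w, r} \<noteq> cv w" using ve2[OF inE] by simp
      then show ?thesis using NL[OF ne] D OLDF \<open>ce {w, r} \<noteq> ce {w, v}\<close> \<open>ce {w, r} \<noteq> ce {w, t}\<close> \<open>ce {w, r} \<noteq> ce {w, y}\<close> by (simp add: cv2_def)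
    qed
    subgoal for r r'
    proof -
      assume r: "r \<notin> {v, t, y}" "r' \<notin> {v, t, y}" "{w, r} \<in> E" "{w, r'} \<in> E" "r \<noteq> r'"
      have "{w, r} \<in> E'" "{w, r'} \<in> E'" using inE'[OF r(3)] inE'[OF r(4)] r D by (auto simp: doubleton_eq_iff)
      then show ?thesis using pe2 r(5) by blast
    qed
    subgoal using ve2[OF EL(6)] ve2[OF EL(14)] ve2[OF EL(15)] D OLDF by (simp add: cv2_def)
    done

  have K_u: "?K u"
    apply (rule vertex_ok[where L="{v, z}" and S="{eu, gu}" and N="\<lambda>r. {u, r} \<in> E" and c="\<lambda>r. ce2 {u, r}" and cold="\<lambda>r. ce {u, r}"])
    subgoal for r r' using Lu3 by (auto simp: CE2)
    subgoal for r by (elim insertE emptyE) (simp_all only: CE2 Lu1 Lu2)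
    subgoal for r
    proof -
      assume r: "r \<notin> {v, z}" "{u, r} \<in> E"
      have rq: "r \<noteq> u" using sg_edge2[OF sg r(2)] by blast
      have ne: "{u, r} \<notin> LS" unfolding LS_def using r rq D by (auto simp: doubleton_eq_iff)
      have inE: "{u, r} \<in> E'" using inE'[OF r(2)] r rq D by (auto simp: doubleton_eq_iff)
      have "ce {u, r} \<noteq> ce {u, v}" using pe2[OF inE EL(10)] r(1) by simp
      have "ce {u, r} \<noteq> ce {u, z}" using pe2[OF inE EL(22)] r(1) by simp
      have "ce {u, r} \<noteq> cv u" using ve2[OF inE] by simp
      then show ?thesis using NL[OF ne] D OLDF \<open>ce {u, r} \<noteq> ce {u, v}\<close> \<open>ce {u, r} \<noteq> ce {u, z}\<close> by (simp add: cv2_def)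
    qed
    subgoal for r r'
    proof -
      assume r: "r \<notin> {v, z}" "r' \<notin> {v, z}" "{u, r} \<in> E" "{u, r'} \<in> E" "r \<noteq> r'"
      have "{u, r} \<in> E'" "{u, r'} \<in> E'" using inE'[OF r(3)] inE'[OF r(4)] r D by (auto simp: doubleton_eq_iff)
      then show ?thesis using pe2 r(5) by blast
    qed
    subgoal using ve2[OF EL(10)] ve2[OF EL(22)] D OLDF by (simp add: cv2_def)
    done

  have K_p: "?K p"
    apply (rule vertex_ok[where L="{y, z}" and S="{fp, gp}" and N="\<lambda>r. {p, r} \<in> E" and c="\<lambda>r. ce2 {p, r}" and cold="\<lambda>r. ce {p, r}"])
    subgoal for r r' using Lp3 by (auto simp: CE2)
    subgoal for r by (elim insertE emptyE) (simp_all only: CE2 Lp1 Lp2)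
    subgoal for r
    proof -
      assume r: "r \<notin> {y, z}" "{p, r} \<in> E"
      have rq: "r \<noteq> p" using sg_edge2[OF sg r(2)] by blast
      have ne: "{p, r} \<notin> LS" unfolding LS_def using r rq D by (auto simp: doubleton_eq_iff)
      have inE: "{p, r} \<in> E'" using inE'[OF r(2)] r rq D by (auto simp: doubleton_eq_iff)
      have "ce {p, r} \<noteq> ce {p, y}" using pe2[OF inE EL(18)] r(1) by simp
      have "ce {p, r} \<noteq> ce {p, z}" using pe2[OF inE EL(19)] r(1) by simp
      have "ce {p, r} \<noteq> cv p" using ve2[OF inE] by simp
      then show ?thesis using NL[OF ne] D OLDF \<open>ce {p, r} \<noteq> ce {p, y}\<close> \<open>ce {p, r} \<noteq> ce {p, z}\<close> by (simp add: cv2_def)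
    qed
    subgoal for r r'
    proof -
      assume r: "r \<notin> {y, z}" "r' \<notin> {y, z}" "{p, r} \<in> E" "{p, r'} \<in> E" "r \<noteq> r'"
      have "{p, r} \<in> E'" "{p, r'} \<in> E'" using inE'[OF r(3)] inE'[OF r(4)] r D by (auto simp: doubleton_eq_iff)
      then show ?thesis using pe2 r(5) by blast
    qed
    subgoal using ve2[OF EL(18)] ve2[OF EL(19)] D OLDF by (simp add: cv2_def)
    done

  have K_t: "?K t"
    apply (rule vertex_ok[where L="{x, w, v}" and S="{nxt, ntw, nvt}" and N="\<lambda>r. {t, r} \<in> E" and c="\<lambda>r. ce2 {t, r}" and cold="\<lambda>r. ce {t, r}"])
    subgoal for r r' using Lt by (auto simp: CE2)
    subgoal for r by (elim insertE emptyE) (simp_all add: CE2)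
    subgoal for r using Nt[of r] by blast
    subgoal for r r' using Nt[of r] by blast
    subgoal using ct D by (auto simp: cv2_def)
    done

  have K_y: "?K y"
    apply (rule vertex_ok[where L="{w, v, p}" and S="{nwy, nvy, nyp}" and N="\<lambda>r. {y, r} \<in> E" and c="\<lambda>r. ce2 {y, r}" and cold="\<lambda>r. ce {y, r}"])
    subgoal for r r' using Ly by (auto simp: CE2)
    subgoal for r by (elim insertE emptyE) (simp_all add: CE2)
    subgoal for r using Ny[of r] by blast
    subgoal for r r' using Ny[of r] by blast
    subgoal using cy D by (auto simp: cv2_def)
    done

  have K_z: "?K z"
    apply (rule vertex_ok[where L="{v, u, p}" and S="{nvz, npz, nzu}" and N="\<lambda>r. {z, r} \<in> E" and c="\<lambda>r. ce2 {z, r}" and cold="\<lambda>r. ce {z, r}"])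
    subgoal for r r' using Lz by (auto simp: CE2)
    subgoal for r by (elim insertE emptyE) (simp_all add: CE2)
    subgoal for r using Nz[of r] by blast
    subgoal for r r' using Nz[of r] by blast
    subgoal using cz D by (auto simp: cv2_def)
    done

  have K: "?K q" for q
  proof -
    consider "q = v" | "q = x" | "q = t" | "q = w" | "q = y" | "q = z" | "q = u" | "q = p"
      | "q \<notin> {v, x, t, w, y, z, u, p}" by blast
    then show ?thesis
    proof cases
      case 9
      show ?thesis
        apply (rule vertex_ok[where L="{}" and S="{}" and N="\<lambda>r. {q, r} \<in> E" and c="\<lambda>r. ce2 {q, r}" and cold="\<lambda>r. ce {q, r}"])
        subgoal by blast
        subgoal by blast
        subgoal for r
        proof -
          assume r: "r \<notin> {}" "{q, r} \<in> E"
          have ne: "{q, r} \<notin> LS" unfolding LS_def using 9 by (auto simp: doubleton_eq_iff)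
          have inE: "{q, r} \<in> E'" using inE'[OF r(2)] 9 by (auto simp: doubleton_eq_iff)
          show ?thesis using NL[OF ne] ve2[OF inE] 9 by (auto simp: cv2_def)
        qed
        subgoal for r r'
        proof -
          assume r: "r \<notin> {}" "r' \<notin> {}" "{q, r} \<in> E" "{q, r'} \<in> E" "r \<noteq> r'"
          have "{q, r} \<in> E'" "{q, r'} \<in> E'" using inE'[OF r(3)] inE'[OF r(4)] 9 by (auto simp: doubleton_eq_iff)
          then show ?thesis using pe2 r(5) by blast
        qed
        subgoal by blast
        done
    qed (use K_v K_x K_t K_w K_y K_z K_u K_p in simp_all)
  qed
  have "total_coloring 9 V E cv2 ce2"
    unfolding total_coloring_def
  proof (intro conjI allI ballI impI)
    fix q assume "q \<in> V" then show "cv2 q \<in> {1..9}" using cvr ct cy cz by (simp add: cv2_def)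
  next
    fix e assume e: "e \<in> E"
    show "ce2 e \<in> {1..9}"
    proof (cases "e \<in> LS")
      case True
      then show ?thesis unfolding LS_def using CE2 newr by auto
    next
      case False
      then have "e \<noteq> {v, y}" unfolding LS_def by blast
      then have "e \<in> E'" using e unfolding E'_def by blast
      then show ?thesis using NL[OF False] cer by simp
    qed
  next
    fix a b assume ab: "{a, b} \<in> E"
    have ne: "a \<noteq> b" using sg_edge2[OF sg ab] by blast
    have ba: "{b, a} \<in> E" using ab by (simp add: insert_commute)
    consider "a \<in> {t, y, z}" | "b \<in> {t, y, z}" | "a \<notin> {t, y, z}" "b \<notin> {t, y, z}" by blast
    then show "cv2 a \<noteq> cv2 b"
    proof cases
      case 1
      then show ?thesis using Nt[of b] Ny[of b] Nz[of b] ab ct cy cz D by (auto simp: cv2_def)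
    next
      case 2
      then show ?thesis using Nt[of a] Ny[of a] Nz[of a] ba ct cy cz D by (auto simp: cv2_def)
    next
      case 3
      then have "{a, b} \<noteq> {v, y}" by (auto simp: doubleton_eq_iff)
      then have "{a, b} \<in> E'" using ab unfolding E'_def by blast
      then show ?thesis using adj 3 by (auto simp: cv2_def)
    qed
  next
    fix e e' assume h: "e \<in> E" "e' \<in> E" "e \<noteq> e' \<and> e \<inter> e' \<noteq> {}"
    then obtain q where q: "q \<in> e" "q \<in> e'" by blast
    obtain r where r: "e = {q, r}" using sg_edge[OF sg h(1) q(1)] by blast
    obtain r' where r': "e' = {q, r'}" using sg_edge[OF sg h(2) q(2)] by blast
    have "r \<noteq> r'" using h(3) r r' by blast
    then show "ce2 e \<noteq> ce2 e'" using K[of q] h(1,2) r r' by blast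
  next
    fix e q assume h: "e \<in> E" "q \<in> e"
    obtain r where r: "e = {q, r}" using sg_edge[OF sg h] by blast
    then show "cv2 q \<noteq> ce2 e" using K[of q] h(1) by metis
  qed
  then show ?thesis unfolding total_colorable_def by blast
qed
lemma nbr3:
  assumes sg: "simple_graph V E" and d: "degree V E t = 3"
    and e: "{a, t} \<in> E" "{b, t} \<in> E" "{c, t} \<in> E" and dd: "a \<noteq> b" "a \<noteq> c" "b \<noteq> c"
    and r: "{t, r} \<in> E"
  shows "r \<in> {a, b, c}"
proof -
  have fV: "finite V" using sg unfolding simple_graph_def by blast
  have sub: "{a, b, c} \<subseteq> {r \<in> V. {r, t} \<in> E}" using e sg_edge2[OF sg] by blast
  have "card {a, b, c} = 3" using dd by simp
  then have "{a, b, c} = {r \<in> V. {r, t} \<in> E}"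
    using card_subset_eq[OF _ sub] fV d unfolding degree_def by simp
  moreover have "r \<in> {r \<in> V. {r, t} \<in> E}" using r sg_edge2[OF sg r] by (simp add: insert_commute)
  ultimately show ?thesis by blast
qed

theorem lemma2p10:
  fixes V :: "'a set" and E :: "'a set set"
  assumes "minimal_counterexample V E"
  shows "\<not> (\<exists>v x t w y z u p.
            v \<in> V \<and> degree V E v = 8 \<and>
            distinct [x, t, w, y, z, u] \<and>
            {v, x} \<in> E \<and> {v, t} \<in> E \<and> {v, w} \<in> E \<and> {v, y} \<in> E \<and> {v, z} \<in> E \<and> {v, u} \<in> E \<and>
            p \<in> V \<and> p \<notin> {v, x, t, w, y, z, u} \<and>
            {x, t} \<in> E \<and> {t, w} \<in> E \<and> {w, y} \<in> E \<and> {z, u} \<in> E \<and>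
            {p, y} \<in> E \<and> {p, z} \<in> E \<and>
            degree V E t = 3 \<and> degree V E y = 3 \<and> degree V E z = 3)"
proof
  have sg: "simple_graph V E" and pl: "planar V E" and md: "max_degree_eq 8 V E" and nf: "\<not> has_4fan V E"
    and nc: "\<not> total_colorable 9 V E"
    and hyp: "\<forall>(VH :: nat set) EH. simple_graph VH EH \<and> planar VH EH \<and> max_degree_le 8 VH EH \<and>
        \<not> has_4fan VH EH \<and> card VH + card EH < card V + card E \<longrightarrow> total_colorable 9 VH EH"
    using assms unfolding minimal_counterexample_def by blast+
  assume "\<exists>v x t w y z u p.
            v \<in> V \<and> degree V E v = 8 \<and>
            distinct [x, t, w, y, z, u] \<and>
            {v, x} \<in> E \<and> {v, t} \<in> E \<and> {v, w} \<in> E \<and> {v, y} \<in> E \<and> {v, z} \<in> E \<and> {v, u} \<in> E \<and>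
            p \<in> V \<and> p \<notin> {v, x, t, w, y, z, u} \<and>
            {x, t} \<in> E \<and> {t, w} \<in> E \<and> {w, y} \<in> E \<and> {z, u} \<in> E \<and>
            {p, y} \<in> E \<and> {p, z} \<in> E \<and>
            degree V E t = 3 \<and> degree V E y = 3 \<and> degree V E z = 3"
  then obtain v x t w y z u p where
    h: "v \<in> V" "degree V E v = 8" "distinct [x, t, w, y, z, u]"
       "{v, x} \<in> E" "{v, t} \<in> E" "{v, w} \<in> E" "{v, y} \<in> E" "{v, z} \<in> E" "{v, u} \<in> E"
       "p \<in> V" "p \<notin> {v, x, t, w, y, z, u}"
       "{x, t} \<in> E" "{t, w} \<in> E" "{w, y} \<in> E" "{z, u} \<in> E" "{p, y} \<in> E" "{p, z} \<in> E"
       "degree V E t = 3" "degree V E y = 3" "degree V E z = 3"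
    by blast
  have vne: "v \<noteq> x" "v \<noteq> t" "v \<noteq> w" "v \<noteq> y" "v \<noteq> z" "v \<noteq> u"
    using sg_edge2[OF sg h(4)] sg_edge2[OF sg h(5)] sg_edge2[OF sg h(6)] sg_edge2[OF sg h(7)]
      sg_edge2[OF sg h(8)] sg_edge2[OF sg h(9)] by blast+
  have dist: "distinct [v, x, t, w, y, z, u, p]" using h(3) h(11) vne by auto
  have D: "x \<noteq> w" "x \<noteq> v" "w \<noteq> v" "w \<noteq> p" "v \<noteq> p" "u \<noteq> p" "v \<noteq> u" using dist by auto
  have yp: "{y, p} \<in> E" using h(16) by (simp add: insert_commute)
  have Nt: "r \<in> {x, w, v}" if "{t, r} \<in> E" for r
    by (rule nbr3[OF sg h(18) h(12)]) (use h(13) h(5) D that in \<open>simp_all add: insert_commute\<close>)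
  have Ny: "r \<in> {w, v, p}" if "{y, r} \<in> E" for r
    by (rule nbr3[OF sg h(19) h(14)]) (use h(7) h(16) D that in \<open>simp_all add: insert_commute\<close>)
  have Nz: "r \<in> {v, u, p}" if "{z, r} \<in> E" for r
    by (rule nbr3[OF sg h(20) h(8)]) (use h(15) h(17) D that in \<open>simp_all add: insert_commute\<close>)
  have dv: "card {r \<in> V. {r, v} \<in> E} = 8" using h(2) unfolding degree_def .
  define E' where "E' = E - {{v, y}}"
  have fE: "finite E" using sg_finite_E[OF sg] .
  have sub: "E' \<subseteq> E" unfolding E'_def by blast
  have "card E' < card E" unfolding E'_def by (rule card_Diff1_less[OF fE h(7)])
  then have lt: "card V + card E' < card V + card E" by simp
  have fV: "finite V" using sg unfolding simple_graph_def by blast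
  have mdl: "max_degree_le 8 V E" using md unfolding max_degree_eq_def by blast
  have "total_colorable 9 V E'"
    by (rule transfer_nat[OF sub_simple[OF sg sub] sub_planar[OF pl sub] sub_maxdeg[OF fV mdl sub]
          sub_fan[OF nf sub] hyp lt])
  then obtain cv ce where col: "total_coloring 9 V E' cv ce" unfolding total_colorable_def by blast
  have "total_colorable 9 V E"
    by (rule extend[OF sg col[unfolded E'_def] dist h(4-9) h(12-14) yp h(17) h(15) Nt Ny Nz dv])
  then show False using nc by blast
qed

end
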